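(* There is no nontrivial valued Abelian group of exponent $3$ which, with the metric $(x,y)\mapsto p(x-y)$ induced by its value $p$, is Urysohn as a metric space.
   Context: A value on an Abelian group $G$ is $p\colon G\to[0,\infty)$ with $p(x)=0\iff x=0$, $p(-x)=p(x)$, $p(x+y)\leqslant p(x)+p(y)$. A group has exponent $3$ if $3x=0$ for all $x$. A metric space $X$ is Urysohn if (U0) it is separable and complete, (U1) every separable metric space of diameter no greater than $\mathrm{diam}\,X$ isometrically embeds into $X$, and (U2) every isometry between two finite subsets of $X$ extends to an isometry of $X$ onto $X$. *)

theory Defs
  imports "HOL-Analysis.Analysis"
begin

definition group_value :: "('a::ab_group_add \<Rightarrow> real) \<Rightarrow> bool" where
  "group_value p \<longleftrightarrow>
     (\<forall>x. 0 \<le> p x) \<and> (\<forall>x. p x = 0 \<longleftrightarrow> x = 0) \<and> (\<forall>x. p (- x) = p x) \<and>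
     (\<forall>x y. p (x + y) \<le> p x + p y)"

definition exponent3 :: "'a::ab_group_add itself \<Rightarrow> bool" where
  "exponent3 _ \<longleftrightarrow> (\<forall>x::'a. x + x + x = 0)"

text \<open>Diameter (in the extended reals, so unbounded spaces have diameter infinity).\<close>
definition mdiam :: "'a set \<Rightarrow> ('a \<Rightarrow> 'a \<Rightarrow> real) \<Rightarrow> ereal" where
  "mdiam M d = (SUP z \<in> M \<times> M. ereal (d (fst z) (snd z)))"

definition isometric_on :: "'a set \<Rightarrow> ('a \<Rightarrow> 'a \<Rightarrow> real) \<Rightarrow> ('b \<Rightarrow> 'b \<Rightarrow> real) \<Rightarrow> ('a \<Rightarrow> 'b) \<Rightarrow> bool" where
  "isometric_on S dS d f \<longleftrightarrow> (\<forall>x\<in>S. \<forall>y\<in>S. d (f x) (f y) = dS x y)"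

text \<open>Every separable metric space has cardinality at most
  the continuum, hence is isometric to a metric space whose carrier is a set of reals;
  condition (U1) therefore quantifies over metric spaces carried by subsets of \<real>.\<close>
definition urysohn :: "'a set \<Rightarrow> ('a \<Rightarrow> 'a \<Rightarrow> real) \<Rightarrow> bool" where
  "urysohn M d \<longleftrightarrow>
     Metric_space M d \<and>
     separable_space (Metric_space.mtopology M d) \<and> Metric_space.mcomplete M d \<and>
     (\<forall>(S::real set) dS. Metric_space S dS \<and> separable_space (Metric_space.mtopology S dS) \<and>
        mdiam S dS \<le> mdiam M d \<longrightarrow> (\<exists>f. f ` S \<subseteq> M \<and> isometric_on S dS d f)) \<and>
     (\<forall>A B f. finite A \<and> A \<subseteq> M \<and> B \<subseteq> M \<and> bij_betw f A B \<and> isometric_on A d d f \<longrightarrow>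
        (\<exists>g. bij_betw g M M \<and> isometric_on M d d g \<and> (\<forall>x\<in>A. g x = f x)))"

end

theory Submission
  imports Defs
begin

theorem proposition2p18:
  fixes p :: "'a::ab_group_add \<Rightarrow> real"
  assumes "group_value p"
    and "exponent3 TYPE('a)"
    and "\<exists>x::'a. x \<noteq> 0"
  shows "\<not> urysohn (UNIV::'a set) (\<lambda>x y. p (x - y))"
proof
  assume U: "urysohn (UNIV::'a set) (\<lambda>x y. p (x - y))"
  have nn: "\<And>x. 0 \<le> p x" and z: "\<And>x. p x = 0 \<longleftrightarrow> x = 0" and sym: "\<And>x. p (- x) = p x"
    and tri: "\<And>x y. p (x + y) \<le> p x + p y" using assms(1) unfolding group_value_def by auto
  have e3: "\<And>x::'a. x + x + x = 0" using assms(2) unfolding exponent3_def by auto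
  obtain x0 :: 'a where x0: "x0 \<noteq> 0" using assms(3) by auto
  define r where "r = p x0 / 2"
  have r: "r > 0" using x0 z nn unfolding r_def by (metis less_eq_real_def zero_less_divide_iff zero_less_numeral)
  define S :: "real set" where "S = {0,1,2,3}"
  define dS :: "real \<Rightarrow> real \<Rightarrow> real" where
    "dS a b = (if a = b then 0 else if a = 3 \<and> b = 2 \<or> a = 2 \<and> b = 3 then 3*r/2
       else if a = 3 \<or> b = 3 then r/2 else r)" for a b
  have MS: "Metric_space S dS"
    unfolding Metric_space_def S_def dS_def using r by auto
  have sep: "separable_space (Metric_space.mtopology S dS)"
    unfolding separable_space_def
  proof (rule exI[of _ S])
    have t: "topspace (Metric_space.mtopology S dS) = S" by (rule Metric_space.topspace_mtopology[OF MS])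
    show "countable S \<and> S \<subseteq> topspace (Metric_space.mtopology S dS) \<and>
      Metric_space.mtopology S dS closure_of S = topspace (Metric_space.mtopology S dS)"
      using t closure_of_topspace[of "Metric_space.mtopology S dS"] by (simp add: S_def)
  qed
  have "mdiam S dS \<le> ereal (p (x0 - 0))"
    unfolding mdiam_def
  proof (rule SUP_least)
    fix zz assume "zz \<in> S \<times> S"
    then show "ereal (dS (fst zz) (snd zz)) \<le> ereal (p (x0 - 0))"
      using r unfolding dS_def r_def by auto
  qed
  also have "\<dots> \<le> mdiam UNIV (\<lambda>x y. p (x - y))"
    unfolding mdiam_def
    using SUP_upper[of "(x0,0)" "UNIV \<times> UNIV" "\<lambda>z. ereal (p (fst z - snd z))"] by simp
  finally have diam: "mdiam S dS \<le> mdiam UNIV (\<lambda>x y. p (x - y))" .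
  obtain f where f: "isometric_on S dS (\<lambda>x y. p (x - y)) f"
  proof -
    have U1: "\<forall>(S::real set) dS. Metric_space S dS \<and> separable_space (Metric_space.mtopology S dS) \<and>
        mdiam S dS \<le> mdiam (UNIV::'a set) (\<lambda>x y. p (x - y)) \<longrightarrow> (\<exists>f. f ` S \<subseteq> UNIV \<and> isometric_on S dS (\<lambda>x y. p (x - y)) f)"
      using U unfolding urysohn_def by (elim conjE)
    show ?thesis using U1[rule_format, of S dS] MS sep diam that by blast
  qed
  have fd: "\<And>a b. a \<in> S \<Longrightarrow> b \<in> S \<Longrightarrow> p (f a - f b) = dS a b"
    using f unfolding isometric_on_def by auto
  define x where "x = f 1 - f 0"
  have px: "p x = r" unfolding x_def using fd[of 1 0] by (simp add: S_def dS_def)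
  have f20: "p (f 2 - f 0) = r" using fd[of 2 0] by (simp add: S_def dS_def)
  have f21: "p (f 2 - f 1) = r" using fd[of 2 1] by (simp add: S_def dS_def)
  have f30: "p (f 3 - f 0) = r/2" using fd[of 3 0] by (simp add: S_def dS_def)
  have f31: "p (f 3 - f 1) = r/2" using fd[of 3 1] by (simp add: S_def dS_def)
  have f32: "p (f 3 - f 2) = 3*r/2" using fd[of 3 2] by (simp add: S_def dS_def)
  have d01: "f 0 \<noteq> f 1" using px r x_def z by force
  have d02: "f 0 \<noteq> f 2" using f20 r z by force
  have d12: "f 1 \<noteq> f 2" using f21 r z by force
  have xn0: "x \<noteq> 0" using px r z by force
  have x2: "x + x = - x" using e3[of x] by (simp add: eq_neg_iff_add_eq_0)
  have xnx: "x \<noteq> - x" using xn0 x2 e3[of x] by (metis add_cancel_right_right)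
  have p2x: "p (x + x) = r" using x2 sym px by simp
  define h where "h w = (if w = f 2 then - x else w - f 0)" for w
  define A where "A = {f 0, f 1, f 2}"
  define B where "B = {0, x, - x}"
  have hA: "h (f 0) = 0" "h (f 1) = x" "h (f 2) = - x"
    using d01 d02 d12 unfolding h_def x_def by auto
  have bij: "bij_betw h A B"
  proof -
    have "h ` A = B" by (simp add: A_def B_def hA)
    moreover have "0 \<noteq> - x" using xn0 by simp
    then have "inj_on h A" unfolding inj_on_def A_def using hA xn0 xnx by auto
    ultimately show ?thesis unfolding bij_betw_def by simp
  qed
  have iso: "isometric_on A (\<lambda>x y. p (x - y)) (\<lambda>x y. p (x - y)) h"
  proof -
    have v: "p (x - - x) = r" "p (- x - x) = r" "p (0 - x) = r" "p (0 - - x) = r"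
      "p (x - 0) = r" "p (- x - 0) = r"
    proof -
      have a: "x - - x = x + x" by simp
      have b: "- x - x = - (x + x)" by simp
      show "p (x - - x) = r" using a p2x by simp
      show "p (- x - x) = r" using b p2x sym by metis
      show "p (0 - x) = r" using sym px by simp
      show "p (0 - - x) = r" using px by simp
      show "p (x - 0) = r" using px by simp
      show "p (- x - 0) = r" using sym px by simp
    qed
    have w: "p (f 0 - f 1) = r" "p (f 1 - f 0) = r" "p (f 0 - f 2) = r" "p (f 2 - f 0) = r"
      "p (f 1 - f 2) = r" "p (f 2 - f 1) = r"
      using px f20 f21 sym unfolding x_def by (metis minus_diff_eq)+
    show ?thesis unfolding isometric_on_def A_def using hA v w by auto
  qed
  obtain g where g: "isometric_on UNIV (\<lambda>x y. p (x - y)) (\<lambda>x y. p (x - y)) g"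
    and gA: "\<forall>w\<in>A. g w = h w"
  proof -
    have U2: "\<forall>A B f. finite A \<and> A \<subseteq> (UNIV::'a set) \<and> B \<subseteq> UNIV \<and> bij_betw f A B \<and> isometric_on A (\<lambda>x y. p (x - y)) (\<lambda>x y. p (x - y)) f \<longrightarrow>
        (\<exists>g. bij_betw g UNIV UNIV \<and> isometric_on UNIV (\<lambda>x y. p (x - y)) (\<lambda>x y. p (x - y)) g \<and> (\<forall>x\<in>A. g x = f x))"
      using U unfolding urysohn_def by (elim conjE)
    have "finite A" by (simp add: A_def)
    then show ?thesis using U2[rule_format, of A B h] bij iso that by blast
  qed
  have gd: "\<And>a b. p (g a - g b) = p (a - b)" using g unfolding isometric_on_def by auto
  define y where "y = g (f 3)"
  have py: "p y = r/2" using gd[of "f 3" "f 0"] gA hA f30 unfolding y_def A_def by simp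
  have pyx: "p (y - x) = r/2" using gd[of "f 3" "f 1"] gA hA f31 unfolding y_def A_def by simp
  have pyx2: "p (y + x) = 3*r/2" using gd[of "f 3" "f 2"] gA hA f32 unfolding y_def A_def by simp
  have "x + y = (x - y) + (- y)"
  proof -
    have "y + y = - y" using e3[of y] by (simp add: eq_neg_iff_add_eq_0)
    have "x - y + - y = x - (y + y)" by (simp add: algebra_simps)
    then show ?thesis using \<open>y + y = - y\<close> by simp
  qed
  then have "p (y + x) \<le> p (x - y) + p (- y)" using tri by (metis add.commute)
  moreover have "p (x - y) = r/2" using pyx sym by (metis minus_diff_eq)
  ultimately show False using py pyx2 sym r by simp
qed

end
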